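(* Let $\xi$ be a random vector with support $\Xi\subset\mathbb{R}^l$ and distribution $P$, let $A\in\mathbb{R}^{n\times n}$, and let $B:\mathbb{R}^l\to\mathbb{R}^{n\times m}$, $M:\mathbb{R}^l\to\mathbb{R}^{m\times m}$, $N:\mathbb{R}^l\to\mathbb{R}^{m\times n}$ be continuous. Suppose there is a positive continuous function $\kappa$ with $\mathbb{E}[\kappa(\xi)]<+\infty$ such that for almost every $\xi$, $$\begin{pmatrix} z^T & u^T\end{pmatrix}\begin{pmatrix} A & B(\xi)\\ N(\xi) & M(\xi)\end{pmatrix}\begin{pmatrix} z\\ u\end{pmatrix}\ \ge\ \kappa(\xi)\big(\|z\|^2+\|u\|^2\big)\quad\forall z\in\mathbb{R}^n,\ u\in\mathbb{R}^m. \qquad(\ast)$$ Then the following hold, where in (ii) and (iii) $\xi$ is any point at which $(\ast)$ holds and $J$ is any subset of $\{1,\dots,m\}$: (i) $z^TAz\ge \sup_{\xi\in\Xi}\kappa(\xi)\|z\|^2$ for all $z\in\mathbb{R}^n$, and $u_J^TM_J(\xi)u_J\ge\kappa(\xi)\|u_J\|^2$ for all $u_J\in\mathbb{R}^{|J|}$ and all $J$; (ii) $A-B(\xi)U_J(M(\xi))N(\xi)$ is well defined and $z^T\big(A-B(\xi)U_J(M(\xi))N(\xi)\big)z\ge\kappa(\xi)\|z\|^2$ for all $z\in\mathbb{R}^n$; (iii) $\|M_J(\xi)^{-1}\|\le 1/\kappa(\xi)$ and $\|(A-B(\xi)U_J(M(\xi))N(\xi))^{-1}\|\le 1/\kapp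a(\xi)$.
   Context: $\|\cdot\|$ denotes the Euclidean norm on vectors and the induced 2-norm on matrices. For $J\subseteq\{1,\dots,m\}$, $D_J$ is the $m\times m$ diagonal matrix with $(D_J)_{jj}=1$ if $j\in J$ and $0$ otherwise; for an $m\times m$ matrix $M$ with $z^TMz>0$ for all $z\neq 0$ (not necessarily symmetric), $U_J(M):=(I-D_J(I-M))^{-1}D_J$. Equivalently, after permuting indices so that $J=\{1,\dots,|J|\}$, $U_J(M)=0$ if $J=\emptyset$ and $U_J(M)=\begin{pmatrix} M_J^{-1}&0\\0&0\end{pmatrix}$ otherwise, where $M_J$ is the $|J|\times|J|$ principal submatrix of $M$ indexed by $J$. *)

theory Defs
  imports "HOL-Analysis.Analysis" "HOL-Probability.Probability"
begin

definition measure_support :: "'a::topological_space measure \<Rightarrow> 'a set" where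
  "measure_support P = {x. \<forall>U. open U \<and> x \<in> U \<longrightarrow> emeasure P U > 0}"

text \<open>Condition (*): the block matrix [[A, B(x)],[N(x), M(x)]] is uniformly
positive definite with modulus kappa(x); the quadratic form of the block
matrix at (z,u) is written out blockwise.\<close>
definition block_coercive ::
  "real^'n^'n \<Rightarrow> ('l \<Rightarrow> real^'m^'n) \<Rightarrow> ('l \<Rightarrow> real^'m^'m) \<Rightarrow> ('l \<Rightarrow> real^'n^'m)
   \<Rightarrow> ('l \<Rightarrow> real) \<Rightarrow> 'l \<Rightarrow> bool" where
  "block_coercive A B M N \<kappa> x \<longleftrightarrow>
     (\<forall>(z::real^'n) (u::real^'m).
        z \<bullet> (A *v z) + z \<bullet> (B x *v u) + u \<bullet> (N x *v z) + u \<bullet> (M x *v u)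
          \<ge> \<kappa> x * ((norm z)\<^sup>2 + (norm u)\<^sup>2))"

definition D_J :: "'m::finite set \<Rightarrow> real^'m^'m" where
  "D_J J = (\<chi> i j. if i = j \<and> i \<in> J then 1 else 0)"

definition U_J :: "'m::finite set \<Rightarrow> real^'m^'m \<Rightarrow> real^'m^'m" where
  "U_J J M = matrix_inv (mat 1 - D_J J ** (mat 1 - M)) ** D_J J"

text \<open>Objects living in R^|J|: vectors u_J are functions on J (only values on J
matter), the principal submatrix M_J has entries M i j for i, j in J.\<close>
definition quad_on :: "'m set \<Rightarrow> real^'m^'m \<Rightarrow> ('m \<Rightarrow> real) \<Rightarrow> real" where
  "quad_on J M u = (\<Sum>i\<in>J. \<Sum>j\<in>J. u i * (M $ i $ j) * u j)"

definition vnorm_on :: "'m set \<Rightarrow> ('m \<Rightarrow> real) \<Rightarrow> real" where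
  "vnorm_on J v = sqrt (\<Sum>i\<in>J. (v i)\<^sup>2)"

definition matvec_on :: "'m set \<Rightarrow> ('m \<Rightarrow> 'm \<Rightarrow> real) \<Rightarrow> ('m \<Rightarrow> real) \<Rightarrow> ('m \<Rightarrow> real)" where
  "matvec_on J X v = (\<lambda>i. \<Sum>j\<in>J. X i j * v j)"

definition opnorm_on :: "'m set \<Rightarrow> ('m \<Rightarrow> 'm \<Rightarrow> real) \<Rightarrow> real" where
  "opnorm_on J X = Sup {vnorm_on J (matvec_on J X v) | v. vnorm_on J v \<le> 1}"

definition is_sub_inverse :: "'m set \<Rightarrow> real^'m^'m \<Rightarrow> ('m \<Rightarrow> 'm \<Rightarrow> real) \<Rightarrow> bool" where
  "is_sub_inverse J M X \<longleftrightarrow>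
     (\<forall>i\<in>J. \<forall>j\<in>J. (\<Sum>k\<in>J. (M $ i $ k) * X k j) = (if i = j then 1 else 0)
                  \<and> (\<Sum>k\<in>J. X i k * (M $ k $ j)) = (if i = j then 1 else 0))"

end

theory Submission
  imports Defs
begin


lemma inv_props:
  fixes S :: "real^'n^'n"
  assumes "invertible S"
  shows "S ** matrix_inv S = mat 1" "matrix_inv S ** S = mat 1"
  using assms unfolding invertible_def matrix_inv_def by (metis (mono_tags, lifting) someI_ex)+

lemma pd_inv:
  fixes S :: "real^'n^'n"
  assumes pd: "\<forall>z. z \<bullet> (S *v z) \<ge> k * (norm z)\<^sup>2" and k: "k > 0"
  shows "invertible S" "\<And>z. norm (matrix_inv S *v z) \<le> (1/k) * norm z"
proof -
  have "\<forall>x. S *v x = 0 \<longrightarrow> x = 0"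
  proof (intro allI impI)
    fix x assume "S *v x = 0"
    with pd have "k * (norm x)\<^sup>2 \<le> 0" by (metis inner_zero_right)
    with k show "x = 0" by (smt (verit) mult_pos_pos norm_eq_zero zero_less_norm_iff zero_less_power)
  qed
  then show inv: "invertible S"
    by (simp add: invertible_left_inverse matrix_left_invertible_ker)
  fix z
  define y where "y = matrix_inv S *v z"
  have Sy: "S *v y = z" unfolding y_def
    by (simp add: matrix_vector_mul_assoc inv_props(1)[OF inv])
  have "k * (norm y)\<^sup>2 \<le> y \<bullet> z" using pd Sy by metis
  also have "\<dots> \<le> norm y * norm z" by (rule norm_cauchy_schwarz)
  finally have h: "k * (norm y)\<^sup>2 \<le> norm y * norm z" .
  show "norm (matrix_inv S *v z) \<le> (1/k) * norm z"
  proof (cases "y = 0")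
    case True then show ?thesis using k y_def by simp
  next
    case False
    then have "norm y > 0" by simp
    with h have "k * norm y \<le> norm z" by (simp add: power2_eq_square)
    with k show ?thesis unfolding y_def[symmetric] by (simp add: field_simps)
  qed
qed




lemma mv_neg: "(A::real^'a^'b) *v (- x) = - (A *v x)"
  by (simp add: vec_eq_iff matrix_vector_mult_def sum_negf)

lemma T_entry:
  fixes M :: "real^'m^'m"
  shows "(mat 1 - D_J J ** (mat 1 - M)) $ i $ j = (if i \<in> J then M $ i $ j else (if i = j then 1 else 0))"
  by (simp add: D_J_def matrix_matrix_mult_def mat_def if_distrib[of "\<lambda>x. x * _"] sum.delta cong: if_cong)

lemma T_mult:
  fixes M :: "real^'m^'m"
  shows "((mat 1 - D_J J ** (mat 1 - M)) *v v) $ i = (if i \<in> J then (M *v v) $ i else v $ i)"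
  unfolding matrix_vector_mult_def vec_lambda_beta T_entry
  by (simp add: if_distrib[of "\<lambda>x. x * _"] sum.delta cong: if_cong)

lemma D_mult:
  shows "(D_J J *v v) $ i = (if i \<in> J then v $ i else 0)"
  by (simp add: matrix_vector_mult_def D_J_def if_distrib[of "\<lambda>x. x * _"] sum.delta cong: if_cong)




lemma sum_UNIV_J:
  fixes f :: "'m::finite \<Rightarrow> real"
  shows "(\<Sum>i\<in>UNIV. if i \<in> J then f i else 0) = (\<Sum>i\<in>J. f i)"
  by (simp add: sum.If_cases)

lemma quad_vec:
  fixes M :: "real^'m^'m" and u :: "'m \<Rightarrow> real" and J :: "'m set"
  shows "(\<chi> i. if i \<in> J then u i else 0) \<bullet> (M *v (\<chi> i. if i \<in> J then u i else 0)) = quad_on J M u"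
    "(norm (\<chi> i. if i \<in> J then u i else 0))\<^sup>2 = (vnorm_on J u)\<^sup>2"
proof -
  define v where "v \<equiv> (\<chi> i. if i \<in> J then u i else 0)"
  have "v \<bullet> (M *v v) = (\<Sum>i\<in>UNIV. if i \<in> J then u i * (\<Sum>j\<in>J. M $ i $ j * u j) else 0)"
    unfolding v_def inner_vec_def matrix_vector_mult_def
    by (simp add: if_distrib[of "\<lambda>x. _ * x"] if_distrib[of "\<lambda>x. x * _"] sum_UNIV_J cong: if_cong)
  also have "\<dots> = quad_on J M u"
    by (simp add: sum_UNIV_J quad_on_def sum_distrib_left mult.assoc)
  finally show "(\<chi> i. if i \<in> J then u i else 0) \<bullet> (M *v (\<chi> i. if i \<in> J then u i else 0)) = quad_on J M u" unfolding v_def .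
  have "(norm v)\<^sup>2 = (\<Sum>i\<in>UNIV. if i \<in> J then (u i)\<^sup>2 else 0)"
    unfolding v_def power2_norm_eq_inner inner_vec_def
    by (simp add: power2_eq_square if_distrib[of "\<lambda>x. _ * x"] cong: if_cong)
  also have "\<dots> = (vnorm_on J u)\<^sup>2"
    by (simp add: sum_UNIV_J vnorm_on_def sum_nonneg)
  finally show "(norm (\<chi> i. if i \<in> J then u i else 0))\<^sup>2 = (vnorm_on J u)\<^sup>2" unfolding v_def .
qed




lemma main_x:
  fixes A :: "real^'n^'n" and B :: "real^'m^'n" and M :: "real^'m^'m" and N :: "real^'n^'m"
  assumes bc: "\<forall>(z::real^'n) (u::real^'m).
        z \<bullet> (A *v z) + z \<bullet> (B *v u) + u \<bullet> (N *v z) + u \<bullet> (M *v u) \<ge> k * ((norm z)\<^sup>2 + (norm u)\<^sup>2)"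
    and k: "k > 0"
  shows "(\<forall>u. quad_on J M u \<ge> k * (vnorm_on J u)\<^sup>2)
            \<and> invertible (mat 1 - D_J J ** (mat 1 - M))
            \<and> (\<forall>z::real^'n. z \<bullet> ((A - B ** U_J J M ** N) *v z) \<ge> k * (norm z)\<^sup>2)
            \<and> (\<exists>X. is_sub_inverse J M X)
            \<and> (\<forall>X. is_sub_inverse J M X \<longrightarrow> opnorm_on J X \<le> 1 / k)
            \<and> invertible (A - B ** U_J J M ** N)
            \<and> onorm (\<lambda>z. matrix_inv (A - B ** U_J J M ** N) *v z) \<le> 1 / k"
proof -
  have Mpd: "u \<bullet> (M *v u) \<ge> k * (norm u)\<^sup>2" for u
    using bc[rule_format, of 0 u] by simp
  have Aq: "z \<bullet> (A *v z) \<ge> k * (norm z)\<^sup>2" for z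
    using bc[rule_format, of z 0] by simp
  have quad: "quad_on J M u \<ge> k * (vnorm_on J u)\<^sup>2" for u
    using Mpd[of "\<chi> i. if i \<in> J then u i else 0"] quad_vec(1)[where M=M and u=u and J=J] quad_vec(2)[where u=u and J=J] by simp
  define T where "T = mat 1 - D_J J ** (mat 1 - M)"
  have "\<forall>v. T *v v = 0 \<longrightarrow> v = 0"
  proof (intro allI impI)
    fix v assume "T *v v = 0"
    then have e: "(if i \<in> J then (M *v v) $ i else v $ i) = 0" for i
      unfolding T_def by (metis T_mult zero_index)
    have "v \<bullet> (M *v v) = 0"
      unfolding inner_vec_def using e by (intro sum.neutral) (metis inner_real_def mult_zero_left mult_zero_right)
    with Mpd[of v] k have "(norm v)\<^sup>2 \<le> 0"
      by (smt (verit) mult_pos_pos zero_less_power zero_less_norm_iff)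
    then show "v = 0" by simp
  qed
  then have Tinv: "invertible T"
    by (simp add: invertible_left_inverse matrix_left_invertible_ker)
  note TV = inv_props[OF Tinv]
  define V where "V = matrix_inv T"
  have U: "U_J J M = V ** D_J J" unfolding U_J_def V_def T_def ..
  have schur: "z \<bullet> ((A - B ** U_J J M ** N) *v z) \<ge> k * (norm z)\<^sup>2" for z
  proof -
    define w where "w = N *v z"
    define u where "u = - (U_J J M *v w)"
    have Tu: "T *v u = - (D_J J *v w)"
      unfolding u_def U mv_neg
      by (simp add: matrix_vector_mul_assoc V_def matrix_mul_assoc TV)
    have comp: "u $ i * (M *v u) $ i = - (u $ i * w $ i)" for i
    proof -
      have "(T *v u) $ i = - (D_J J *v w) $ i" using Tu by simp
      then have "(if i \<in> J then (M *v u) $ i else u $ i) = - (if i \<in> J then w $ i else 0)"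
        unfolding T_def T_mult D_mult by simp
      then show ?thesis by (cases "i \<in> J") auto
    qed
    have "u \<bullet> (M *v u) = - (u \<bullet> w)"
      unfolding inner_vec_def using comp by (simp add: sum_negf)
    moreover have "z \<bullet> (B *v u) = - (z \<bullet> ((B ** U_J J M ** N) *v z))"
      unfolding u_def w_def by (simp add: matrix_vector_mul_assoc[symmetric] matrix_mul_assoc mv_neg)
    moreover have "u \<bullet> (N *v z) = u \<bullet> w" unfolding w_def ..
    moreover have "k * (norm u)\<^sup>2 \<ge> 0" using k by simp
    ultimately show ?thesis using bc[rule_format, of z u]
      by (simp add: matrix_vector_mult_diff_rdistrib inner_diff_right algebra_simps)
  qed
  have Vr: "(\<Sum>kk\<in>UNIV. T $ i $ kk * V $ kk $ j) = (if i = j then 1 else 0)" for i j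
    using arg_cong[OF TV(1), of "\<lambda>X. X $ i $ j"] unfolding V_def
    by (simp add: matrix_matrix_mult_def mat_def)
  have Vl: "(\<Sum>kk\<in>UNIV. V $ i $ kk * T $ kk $ j) = (if i = j then 1 else 0)" for i j
    using arg_cong[OF TV(2), of "\<lambda>X. X $ i $ j"] unfolding V_def
    by (simp add: matrix_matrix_mult_def mat_def)
  have Tij: "T $ i $ j = (if i \<in> J then M $ i $ j else (if i = j then 1 else 0))" for i j
    unfolding T_def by (rule T_entry)
  have Vout: "V $ i $ j = (if i = j then 1 else 0)" if "i \<notin> J" for i j
    using Vr[of i j] that unfolding T_def T_entry
    by (simp add: if_distrib[of "\<lambda>x. x * _"] sum.delta cong: if_cong)
  have subinv: "is_sub_inverse J M (\<lambda>i j. V $ i $ j)"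
    unfolding is_sub_inverse_def
  proof (intro ballI conjI)
    fix i j assume i: "i \<in> J" and j: "j \<in> J"
    have "(\<Sum>kk\<in>UNIV. T $ i $ kk * V $ kk $ j) = (\<Sum>kk\<in>J. M $ i $ kk * V $ kk $ j)"
      by (rule sum.mono_neutral_cong_right) (use i j Vout in \<open>auto simp: Tij\<close>)
    then show "(\<Sum>kk\<in>J. M $ i $ kk * V $ kk $ j) = (if i = j then 1 else 0)" using Vr by simp
    have "(\<Sum>kk\<in>UNIV. V $ i $ kk * T $ kk $ j) = (\<Sum>kk\<in>J. V $ i $ kk * M $ kk $ j)"
      by (rule sum.mono_neutral_cong_right) (use i j in \<open>auto simp: Tij\<close>)
    then show "(\<Sum>kk\<in>J. V $ i $ kk * M $ kk $ j) = (if i = j then 1 else 0)" using Vl by simp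
  qed
  have opn: "opnorm_on J X \<le> 1 / k" if X: "is_sub_inverse J M X" for X
    unfolding opnorm_on_def
  proof (rule cSup_least)
    show "{vnorm_on J (matvec_on J X v) |v. vnorm_on J v \<le> 1} \<noteq> {}"
    proof -
      have "vnorm_on J (\<lambda>_. 0) \<le> 1" by (simp add: vnorm_on_def)
      then show ?thesis by blast
    qed
  next
    fix r assume "r \<in> {vnorm_on J (matvec_on J X v) |v. vnorm_on J v \<le> 1}"
    then obtain v where r: "r = vnorm_on J (matvec_on J X v)" and v: "vnorm_on J v \<le> 1" by blast
    define y where "y = matvec_on J X v"
    have My: "(\<Sum>j\<in>J. M $ i $ j * y j) = v i" if i: "i \<in> J" for i
    proof -
      have "(\<Sum>j\<in>J. M $ i $ j * y j) = (\<Sum>j\<in>J. \<Sum>l\<in>J. M $ i $ j * X j l * v l)"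
        unfolding y_def matvec_on_def by (simp add: sum_distrib_left mult.assoc)
      also have "\<dots> = (\<Sum>l\<in>J. \<Sum>j\<in>J. M $ i $ j * X j l * v l)"
        by (rule sum.swap)
      also have "\<dots> = (\<Sum>l\<in>J. (\<Sum>j\<in>J. M $ i $ j * X j l) * v l)"
        by (simp add: sum_distrib_right)
      also have "\<dots> = (\<Sum>l\<in>J. (if i = l then 1 else 0) * v l)"
        using X i unfolding is_sub_inverse_def by (intro sum.cong) auto
      also have "\<dots> = v i" using i by (simp add: if_distrib[of "\<lambda>x. x * _"] sum.delta cong: if_cong)
      finally show ?thesis .
    qed
    have nn: "vnorm_on J y \<ge> 0" by (simp add: vnorm_on_def sum_nonneg)
    have "quad_on J M y = (\<Sum>i\<in>J. y i * v i)"
      unfolding quad_on_def using My by (simp add: mult.assoc sum_distrib_left[symmetric])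
    also have "\<dots> \<le> (\<Sum>i\<in>J. \<bar>y i\<bar> * \<bar>v i\<bar>)"
      by (intro sum_mono) (simp add: abs_mult[symmetric])
    also have "\<dots> \<le> vnorm_on J y * vnorm_on J v"
      using L2_set_mult_ineq[where f=y and g=v and A=J] by (simp add: L2_set_def vnorm_on_def)
    also have "\<dots> \<le> vnorm_on J y"
      by (rule mult_left_le[OF v nn])
    finally have h: "k * (vnorm_on J y)\<^sup>2 \<le> vnorm_on J y" using quad[of y] by linarith
    show "r \<le> 1 / k"
    proof (cases "vnorm_on J y = 0")
      case True then show ?thesis using r y_def k by simp
    next
      case False
      with nn have "vnorm_on J y > 0" by simp
      with h have "k * vnorm_on J y \<le> 1" by (simp add: power2_eq_square)
      with k show ?thesis using r y_def by (simp add: field_simps)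
    qed
  qed
  have Sinv: "invertible (A - B ** U_J J M ** N)"
    using pd_inv(1)[where S="A - B ** U_J J M ** N" and k=k] schur k by blast
  have on: "onorm (\<lambda>z. matrix_inv (A - B ** U_J J M ** N) *v z) \<le> 1 / k"
    by (rule onorm_le) (use pd_inv(2)[where S="A - B ** U_J J M ** N" and k=k] schur k in auto)
  show ?thesis
    using quad Tinv schur subinv opn Sinv on unfolding T_def by blast
qed




lemma cont_mv:
  fixes B :: "real^'l \<Rightarrow> real^'m^'n"
  assumes "continuous_on UNIV B"
  shows "continuous_on UNIV (\<lambda>x. B x *v u)"
proof -
  have "linear (\<lambda>m::real^'m^'n. m *v u)"
    by (rule linearI) (simp_all add: vec_eq_iff matrix_vector_mult_def sum.distrib sum_distrib_left distrib_right mult.assoc)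
  then have "continuous_on UNIV (\<lambda>m::real^'m^'n. m *v u)"
    by (simp add: linear_continuous_on linear_conv_bounded_linear)
  then show ?thesis
    by (rule continuous_on_compose2[OF _ assms]) simp
qed

lemma closed_bc:
  fixes A :: "real^'n^'n" and B :: "real^'l \<Rightarrow> real^'m^'n" and M :: "real^'l \<Rightarrow> real^'m^'m"
    and N :: "real^'l \<Rightarrow> real^'n^'m" and \<kappa> :: "real^'l \<Rightarrow> real"
  assumes "continuous_on UNIV B" and "continuous_on UNIV M" and "continuous_on UNIV N"
    and "continuous_on UNIV \<kappa>"
  shows "closed {x. block_coercive A B M N \<kappa> x}"
proof -
  have "{x. block_coercive A B M N \<kappa> x} = (\<Inter>z. \<Inter>u. {x. \<kappa> x * ((norm z)\<^sup>2 + (norm u)\<^sup>2) \<le>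
          z \<bullet> (A *v z) + z \<bullet> (B x *v u) + u \<bullet> (N x *v z) + u \<bullet> (M x *v u)})"
    unfolding block_coercive_def by auto
  also have "closed \<dots>"
    by (intro closed_INT ballI closed_Collect_le continuous_intros cont_mv assms)
  finally show ?thesis .
qed




theorem lemma2p1:
  fixes P :: "(real^'l) measure"
    and A :: "real^'n^'n"
    and B :: "real^'l \<Rightarrow> real^'m^'n"
    and M :: "real^'l \<Rightarrow> real^'m^'m"
    and N :: "real^'l \<Rightarrow> real^'n^'m"
    and \<kappa> :: "real^'l \<Rightarrow> real"
  assumes "prob_space P"
    and "sets P = sets borel"
    and "continuous_on UNIV B" and "continuous_on UNIV M" and "continuous_on UNIV N"
    and "continuous_on UNIV \<kappa>" and "\<forall>x. \<kappa> x > 0"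
    and "(\<integral>\<^sup>+ x. ennreal (\<kappa> x) \<partial>P) < \<infinity>"
    and "AE x in P. block_coercive A B M N \<kappa> x"
  shows "(\<forall>z::real^'n. (SUP x\<in>measure_support P. ereal (\<kappa> x)) * ereal ((norm z)\<^sup>2)
                         \<le> ereal (z \<bullet> (A *v z)))
       \<and> (\<forall>x. block_coercive A B M N \<kappa> x \<longrightarrow>
           (\<forall>J::'m set.
              (\<forall>u. quad_on J (M x) u \<ge> \<kappa> x * (vnorm_on J u)\<^sup>2)
            \<and> invertible (mat 1 - D_J J ** (mat 1 - M x))
            \<and> (\<forall>z::real^'n. z \<bullet> ((A - B x ** U_J J (M x) ** N x) *v z) \<ge> \<kappa> x * (norm z)\<^sup>2)
            \<and> (\<exists>X. is_sub_inverse J (M x) X)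
            \<and> (\<forall>X. is_sub_inverse J (M x) X \<longrightarrow> opnorm_on J X \<le> 1 / \<kappa> x)
            \<and> invertible (A - B x ** U_J J (M x) ** N x)
            \<and> onorm (\<lambda>z. matrix_inv (A - B x ** U_J J (M x) ** N x) *v z) \<le> 1 / \<kappa> x))"
proof -
  have part1: "\<forall>z::real^'n. (SUP x\<in>measure_support P. ereal (\<kappa> x)) * ereal ((norm z)\<^sup>2)
                         \<le> ereal (z \<bullet> (A *v z))"
  proof
  fix z :: "real^'n"
  have sp: "space P = UNIV" using sets_eq_imp_space_eq[OF assms(2)] by simp
  have supp: "block_coercive A B M N \<kappa> x" if x: "x \<in> measure_support P" for x
  proof (rule ccontr)
    assume nbc: "\<not> block_coercive A B M N \<kappa> x"
    define U where "U = - {x. block_coercive A B M N \<kappa> x}"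
    have oU: "open U" unfolding U_def using closed_bc[OF assms(3-6), of A] by (simp add: open_Compl)
    have "x \<in> U" using nbc U_def by simp
    with oU x have pos: "emeasure P U > 0" unfolding measure_support_def by blast
    have "U \<in> sets P" using oU assms(2) by simp
    moreover have "{x\<in>space P. \<not> block_coercive A B M N \<kappa> x} = U" unfolding U_def sp by auto
    ultimately have "emeasure P U = 0" using AE_iff_measurable assms(9) by blast
    with pos show False by simp
  qed
  have Az: "\<kappa> x * (norm z)\<^sup>2 \<le> z \<bullet> (A *v z)" if "x \<in> measure_support P" for x
    using supp[OF that] unfolding block_coercive_def by (metis (no_types, lifting) add.right_neutral inner_zero_left
        inner_zero_right matrix_vector_mult_0_right norm_zero power_zero_numeral)
  show "(SUP x\<in>measure_support P. ereal (\<kappa> x)) * ereal ((norm z)\<^sup>2) \<le> ereal (z \<bullet> (A *v z))"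
  proof (cases "z = 0")
    case True then show ?thesis by (simp add: zero_ereal_def[symmetric])
  next
    case False
    then have np: "(norm z)\<^sup>2 > 0" by simp
    have "(SUP x\<in>measure_support P. ereal (\<kappa> x)) \<le> ereal (z \<bullet> (A *v z) / (norm z)\<^sup>2)"
    proof (rule SUP_least)
      fix x assume "x \<in> measure_support P"
      then show "ereal (\<kappa> x) \<le> ereal (z \<bullet> (A *v z) / (norm z)\<^sup>2)"
        using Az np by (simp add: pos_le_divide_eq)
    qed
    then have "(SUP x\<in>measure_support P. ereal (\<kappa> x)) * ereal ((norm z)\<^sup>2)
        \<le> ereal (z \<bullet> (A *v z) / (norm z)\<^sup>2) * ereal ((norm z)\<^sup>2)"
      by (rule ereal_mult_right_mono) simp
    also have "\<dots> = ereal (z \<bullet> (A *v z))" using np by simp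
    finally show ?thesis .
  qed
  qed
  show ?thesis
    apply (intro conjI[OF part1] allI impI)
    apply (rule main_x)
     apply (simp_all add: block_coercive_def assms(7)[rule_format])
    done
qed


end
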